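(* In the setting described in the context, fix $R\in\Gamma$. Then for every $t\in[0,p|R|r^2]$, \[\mathbb{P}\Big\{\big|\|X_{R'}\|_{2\to2}^2-p\|X_R\|_{2\to2}^2\big|\ge t\Big\}\le (3d+3)\exp\Big(-\frac{t^2}{48p|R|r^4}\Big).\]
   Context: Let $X=\{x_i\}_{i\in[n]}$ be points in $\mathbb{R}^d$ and $\Gamma$ a partition of $[n]$ into $k$ nonempty sets. For nonempty $S\subseteq[n]$, $c_S:=\frac1{|S|}\sum_{i\in S}x_i$, and $X_S$ denotes the $d\times n$ matrix whose $i$-th column is $x_i-c_S$ if $i\in S$ and $0$ otherwise. Let $r:=\max_{S\in\Gamma}\max_{i\in S}\|x_i-c_S\|$. Let $p\in(0,1]$ and let $W\subseteq[n]$ be random, containing each index independently with probability $p$; for $S\in\Gamma$ put $S':=S\cap W$ (so $X_{R'}$ has columns $x_i-c_{R'}$ for $i\in R'$ and zero otherwise; it is undefined when $R'=\emptyset$). *)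

theory Defs
  imports "HOL-Probability.Probability" "HOL-Library.Disjoint_Sets"
begin

text \<open>Points are indexed by a finite type 'n (so [n] is UNIV :: 'n set, n = CARD('n));
  they live in real^'d (so d = CARD('d)).\<close>

definition centroid :: "('n \<Rightarrow> real^'d) \<Rightarrow> 'n set \<Rightarrow> real^'d" where
  "centroid x S = (1 / real (card S)) *\<^sub>R (\<Sum>i\<in>S. x i)"

definition Xmat :: "('n::finite \<Rightarrow> real^'d) \<Rightarrow> 'n set \<Rightarrow> real^'n^'d" where
  "Xmat x S = (\<chi> j i. if i \<in> S then (x i - centroid x S) $ j else 0)"

definition opnorm2 :: "real^'n^'d \<Rightarrow> real" where
  "opnorm2 A = onorm (\<lambda>v. A *v v)"

definition radius :: "('n::finite \<Rightarrow> real^'d) \<Rightarrow> 'n set set \<Rightarrow> real" where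
  "radius x \<Gamma> = Max {norm (x i - centroid x S) | S i. S \<in> \<Gamma> \<and> i \<in> S}"

end

theory Submission
  imports Defs
begin

lemma cosh_series: "(\<lambda>k. x ^ (2*k) / fact (2*k)) sums cosh (x::real)"
proof -
  have "(\<lambda>n. sum (\<lambda>j. if even j then x ^ j /\<^sub>R fact j else 0) {n*2..<n*2+2}) sums cosh x"
    by (rule sums_group[OF cosh_converges]) simp
  moreover have "\<And>n. sum (\<lambda>j. if even j then x ^ j /\<^sub>R fact j else 0) {n*2..<n*2+2} = x ^ (2*n) / fact (2*n)"
  proof -
    fix n :: nat
    have "{n*2..<n*2+2} = {2*n, Suc (2*n)}" by auto
    then show "sum (\<lambda>j. if even j then x ^ j /\<^sub>R fact j else 0) {n*2..<n*2+2} = x ^ (2*n) / fact (2*n)"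
      by (simp add: divide_inverse mult.commute)
  qed
  ultimately show ?thesis by simp
qed

lemma sinh_series: "(\<lambda>k. x ^ (2*k+1) / fact (2*k+1)) sums sinh (x::real)"
proof -
  have "(\<lambda>n. sum (\<lambda>j. if even j then 0 else x ^ j /\<^sub>R fact j) {n*2..<n*2+2}) sums sinh x"
    by (rule sums_group[OF sinh_converges]) simp
  moreover have "\<And>n. sum (\<lambda>j. if even j then 0 else x ^ j /\<^sub>R fact j) {n*2..<n*2+2} = x ^ (2*n+1) / fact (2*n+1)"
  proof -
    fix n :: nat
    have "{n*2..<n*2+2} = {2*n, Suc (2*n)}" by auto
    then show "sum (\<lambda>j. if even j then 0 else x ^ j /\<^sub>R fact j) {n*2..<n*2+2} = x ^ (2*n+1) / fact (2*n+1)"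
      by (simp add: divide_inverse mult.commute)
  qed
  ultimately show ?thesis by simp
qed

lemma cosh_sqrt_series:
  assumes "0 \<le> s"
  shows "(\<lambda>k. l ^ (2*k) * s ^ k / fact (2*k)) sums cosh (l * sqrt s)"
proof -
  have "(l * sqrt s) ^ (2*k) = l ^ (2*k) * s ^ k" for k
    using assms by (simp add: power_mult_distrib power_mult real_sqrt_pow2)
  then show ?thesis using cosh_series[of "l * sqrt s"] by simp
qed

lemma sinh_ge_self: "0 \<le> x \<Longrightarrow> x \<le> sinh (x::real)"
proof -
  assume x: "0 \<le> x"
  have "sum (\<lambda>k. x ^ (2*k+1) / fact (2*k+1)) {0} \<le> suminf (\<lambda>k. x ^ (2*k+1) / fact (2*k+1))"
    by (rule sum_le_suminf) (use sinh_series[of x] x in \<open>auto simp: sums_iff\<close>)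
  then show ?thesis using sinh_series[of x] by (simp add: sums_iff)
qed

lemma pk:
  fixes a L c p :: real and k :: nat
  assumes a: "0 \<le> a" and L: "0 \<le> L" and c: "\<bar>c\<bar> \<le> a * L" and p0: "0 \<le> p" and p1: "p \<le> 1"
  shows "p * (a\<^sup>2 + 2*(1-p)*c + (1-p)\<^sup>2*L\<^sup>2) ^ k + (1-p) * (a\<^sup>2 - 2*p*c + p\<^sup>2*L\<^sup>2) ^ k
         \<le> (1-p) * a ^ (2*k) + p * ((a+L) ^ (2*k) - 2 * real k * a ^ (2*k-1) * L)"
proof -
  define A where "A = a\<^sup>2"
  define D where "D = 2*a*L + L\<^sup>2"
  define h where "h j = (if j < 2 then 0 else real (k choose j) * A ^ (k-j))" for j
  define g where "g x = (\<Sum>j\<le>k. h j * x ^ j)" for x :: real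
  have A0: "0 \<le> A" by (simp add: A_def)
  have D0: "0 \<le> D" using a L by (simp add: D_def)
  have h0: "0 \<le> h j" for j using A0 by (simp add: h_def)
  have expand: "(A + x) ^ k = A ^ k + real k * A ^ (k-1) * x + g x" for x
  proof -
    have "(A + x) ^ k = (\<Sum>j\<le>k. real (k choose j) * x ^ j * A ^ (k-j))"
      by (subst add.commute) (rule binomial_ring)
    also have "\<dots> = (\<Sum>j\<le>k. h j * x ^ j + (if j = 0 then A ^ k else 0) + (if j = 1 then real k * A ^ (k-1) * x else 0))"
      by (intro sum.cong refl) (auto simp: h_def)
    also have "\<dots> = g x + A ^ k + (\<Sum>j\<le>k. (if j = 1 then real k * A ^ (k-1) * x else 0))"
      by (simp add: sum.distrib g_def)
    also have "(\<Sum>j\<le>k. (if j = 1 then real k * A ^ (k-1) * x else 0)) = real k * A ^ (k-1) * x"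
      by (cases k) (auto simp: sum.delta)
    finally show ?thesis by simp
  qed
  have gle: "g x \<le> \<theta>\<^sup>2 * g D" if t0: "0 \<le> \<theta>" and t1: "\<theta> \<le> 1" and xb: "\<bar>x\<bar> \<le> \<theta> * D" for x \<theta>
  proof -
    have "h j * x ^ j \<le> \<theta>\<^sup>2 * (h j * D ^ j)" if "j \<le> k" for j
    proof (cases "j < 2")
      case True then show ?thesis by (simp add: h_def)
    next
      case False
      have "x ^ j \<le> \<bar>x\<bar> ^ j" by (metis abs_ge_self power_abs)
      also have "\<dots> \<le> (\<theta> * D) ^ j" by (rule power_mono[OF xb]) simp
      also have "\<dots> = \<theta> ^ j * D ^ j" by (simp add: power_mult_distrib)
      also have "\<dots> \<le> \<theta>\<^sup>2 * D ^ j"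
        using False t0 t1 D0 by (intro mult_right_mono power_decreasing) auto
      finally show ?thesis using h0[of j] by (metis mult.left_commute mult_left_mono)
    qed
    then have "g x \<le> (\<Sum>j\<le>k. \<theta>\<^sup>2 * (h j * D ^ j))" unfolding g_def by (intro sum_mono) auto
    then show ?thesis by (simp add: g_def sum_distrib_left)
  qed
  have gD0: "0 \<le> g D" unfolding g_def using h0 D0 by (intro sum_nonneg) simp
  define B1 where "B1 = 2*(1-p)*c + (1-p)\<^sup>2*L\<^sup>2"
  define B0 where "B0 = - 2*p*c + p\<^sup>2*L\<^sup>2"
  have B1b: "\<bar>B1\<bar> \<le> (1-p) * D"
  proof -
    have "\<bar>B1\<bar> \<le> \<bar>2*(1-p)*c\<bar> + \<bar>(1-p)\<^sup>2*L\<^sup>2\<bar>" unfolding B1_def by (rule abs_triangle_ineq)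
    also have "\<dots> = 2*(1-p)*\<bar>c\<bar> + (1-p)\<^sup>2*L\<^sup>2" using p1 by (simp add: abs_mult)
    also have "\<dots> \<le> 2*(1-p)*(a*L) + (1-p)*L\<^sup>2"
      using p0 p1 c by (intro add_mono mult_left_mono mult_right_mono) (auto simp: power2_eq_square mult_left_le)
    finally show ?thesis by (simp add: D_def algebra_simps)
  qed
  have B0b: "\<bar>B0\<bar> \<le> p * D"
  proof -
    have "\<bar>B0\<bar> \<le> \<bar>- 2*p*c\<bar> + \<bar>p\<^sup>2*L\<^sup>2\<bar>" unfolding B0_def by (rule abs_triangle_ineq)
    also have "\<dots> = 2*p*\<bar>c\<bar> + p\<^sup>2*L\<^sup>2" using p0 by (simp add: abs_mult)
    also have "\<dots> \<le> 2*p*(a*L) + p*L\<^sup>2"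
      using p0 p1 c by (intro add_mono mult_left_mono mult_right_mono) (auto simp: power2_eq_square mult_left_le)
    finally show ?thesis by (simp add: D_def algebra_simps)
  qed
  have "p * (A + B1) ^ k + (1-p) * (A + B0) ^ k
        = A ^ k + real k * A ^ (k-1) * (p * B1 + (1-p) * B0) + p * g B1 + (1-p) * g B0"
    unfolding expand by (simp only: algebra_simps)
  also have "p * B1 + (1-p) * B0 = p * (1-p) * L\<^sup>2"
    by (simp add: B1_def B0_def algebra_simps power2_eq_square)
  also have "p * g B1 \<le> p * ((1-p)\<^sup>2 * g D)"
    using gle[OF _ _ B1b] p0 p1 by (intro mult_left_mono) auto
  also have "(1-p) * g B0 \<le> (1-p) * (p\<^sup>2 * g D)"
    using gle[OF _ _ B0b] p0 p1 by (intro mult_left_mono) auto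
  finally have 1: "p * (A + B1) ^ k + (1-p) * (A + B0) ^ k
        \<le> A ^ k + p * (1-p) * (real k * A ^ (k-1) * L\<^sup>2 + g D)"
    by (simp add: algebra_simps power2_eq_square)
  define X where "X = real k * A ^ (k-1) * L\<^sup>2 + g D"
  have X0: "0 \<le> X" unfolding X_def using gD0 A0 by simp
  have "(a+L)\<^sup>2 = A + D" by (simp add: A_def D_def power2_eq_square algebra_simps)
  then have "(a+L) ^ (2*k) = (A + D) ^ k"
    by (simp add: power_mult)
  also have "\<dots> = A ^ k + real k * A ^ (k-1) * D + g D" by (rule expand)
  finally have 2: "(a+L) ^ (2*k) = A ^ k + real k * A ^ (k-1) * (2*a*L) + X"
    by (simp add: X_def D_def algebra_simps)
  have 3: "real k * A ^ (k-1) * (2*a*L) = 2 * real k * a ^ (2*k-1) * L"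
  proof (cases k)
    case 0 then show ?thesis by simp
  next
    case (Suc k')
    have e: "a ^ (2*k-1) = A ^ k' * a" using Suc by (simp add: A_def power_mult[symmetric] mult_2)
    have "k - 1 = k'" using Suc by simp
    then show ?thesis unfolding e by (simp add: algebra_simps)
  qed
  have "0 \<le> p * p * X" using p0 X0 by simp
  then have "p * (1-p) * X \<le> p * X" by (simp add: algebra_simps)
  have e1: "a\<^sup>2 + 2*(1-p)*c + (1-p)\<^sup>2*L\<^sup>2 = A + B1" by (simp add: A_def B1_def)
  have e0: "a\<^sup>2 - 2*p*c + p\<^sup>2*L\<^sup>2 = A + B0" by (simp add: A_def B0_def)
  have e2: "a ^ (2*k) = A ^ k" by (simp add: A_def power_mult)
  have e3: "(1-p) * A ^ k + p * ((a+L) ^ (2*k) - 2 * real k * a ^ (2*k-1) * L) = A ^ k + p * X"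
    unfolding 2 3[symmetric] by (simp add: algebra_simps)
  show ?thesis unfolding e1 e0 e2 e3 using 1[folded X_def] \<open>p * (1-p) * X \<le> p * X\<close> by linarith
qed

lemma t1: fixes l a L :: real shows
  "l ^ (2 * Suc k) / fact (2 * Suc k) * (2 * real (Suc k) * a ^ (2 * Suc k - 1) * L) = (l * L) * ((l*a) ^ (2*k+1) / fact (2*k+1))"
proof -
  have e1: "fact (2 * Suc k) = (2 * real k + 2) * (fact (2*k+1) :: real)"
    by (simp add: algebra_simps)
  have e2: "2 * Suc k - 1 = 2*k+1" by simp
  have e3: "l ^ (2 * Suc k) = l * l ^ (2*k+1)" by simp
  have e4: "(2 * real k + 2) = 2 * real (Suc k)" by simp
  have ne: "(fact (2*k+1) :: real) \<noteq> 0" "2 * real (Suc k) \<noteq> 0" by simp_all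
  have g: "l * l ^ j / (n * F) * (n * a ^ j * L) = l * L * (l ^ j * a ^ j / F)" if "F \<noteq> 0" "n \<noteq> 0" for F n :: real and j
    using that by (simp add: field_simps)
  show ?thesis unfolding e1 e2 e3 e4 power_mult_distrib mult.assoc[of 2 "real (Suc k)"] using g[OF ne] 
    by (simp only: mult.assoc)
qed
lemma t2: fixes l a L p A B C F :: real
  assumes "F \<noteq> 0"
  shows "l ^ k / F * ((1-p) * A + p * (B - C)) = (1-p) * (l ^ k * A / F) + p * (l ^ k * B / F - l ^ k / F * C)"
  using assms by (simp add: field_simps)
lemma t3: fixes l a L p :: real shows
  "cosh (l * a) * (1 + p * (exp (l * L) - 1 - l * L)) - ((1-p) * cosh (l*a) + p * (cosh (l*(a+L)) - l * L * sinh (l*a)))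
     = p * ((cosh (l*a) - sinh (l*a)) * (sinh (l*L) - l*L))"
proof -
  have "cosh (l*(a+L)) = cosh (l*a) * cosh (l*L) + sinh (l*a) * sinh (l*L)" by (simp add: distrib_left cosh_add)
  moreover have "exp (l*L) = cosh (l*L) + sinh (l*L)" by (simp add: cosh_plus_sinh)
  ultimately show ?thesis by (simp add: algebra_simps)
qed

lemma norm_add_scaleR_sq:
  fixes w Y :: "'a::real_inner"
  shows "(norm (w + u *\<^sub>R Y))\<^sup>2 = (norm w)\<^sup>2 + 2*u*(w \<bullet> Y) + u\<^sup>2*(norm Y)\<^sup>2"
  unfolding power2_norm_eq_inner
  by (simp add: inner_add_left inner_add_right inner_commute[of Y w] algebra_simps power2_eq_square)

lemma os:
  fixes w Y :: "'a::real_inner" and p l :: real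
  assumes p0: "0 \<le> p" and p1: "p \<le> 1" and l0: "0 \<le> l"
  shows "p * cosh (l * norm (w + (1-p) *\<^sub>R Y)) + (1-p) * cosh (l * norm (w + (-p) *\<^sub>R Y))
         \<le> cosh (l * norm w) * (1 + p * (exp (l * norm Y) - 1 - l * norm Y))"
proof -
  define a where "a = norm w"
  define L where "L = norm Y"
  define c where "c = w \<bullet> Y"
  have a0: "0 \<le> a" and L0: "0 \<le> L" by (auto simp: a_def L_def)
  have cb: "\<bar>c\<bar> \<le> a * L" unfolding a_def L_def c_def by (rule Cauchy_Schwarz_ineq2)
  define s1 where "s1 = a\<^sup>2 + 2*(1-p)*c + (1-p)\<^sup>2*L\<^sup>2"
  define s0 where "s0 = a\<^sup>2 - 2*p*c + p\<^sup>2*L\<^sup>2"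
  have e1: "(norm (w + (1-p) *\<^sub>R Y))\<^sup>2 = s1"
    using norm_add_scaleR_sq[of w "1-p" Y] unfolding s1_def a_def L_def c_def by simp
  have e0: "(norm (w + (-p) *\<^sub>R Y))\<^sup>2 = s0"
    using norm_add_scaleR_sq[of w "-p" Y] unfolding s0_def a_def L_def c_def by simp
  have n1: "norm (w + (1-p) *\<^sub>R Y) = sqrt s1" unfolding e1[symmetric] by simp
  have n0: "norm (w + (-p) *\<^sub>R Y) = sqrt s0" unfolding e0[symmetric] by simp
  have s10: "0 \<le> s1" and s00: "0 \<le> s0" unfolding e1[symmetric] e0[symmetric] by simp_all
  define T where "T k = l ^ (2*k) / fact (2*k)" for k :: nat
  have T0: "0 \<le> T k" for k using l0 by (simp add: T_def)
  have lhs: "(\<lambda>k. p * (T k * s1 ^ k) + (1-p) * (T k * s0 ^ k)) sums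
      (p * cosh (l * norm (w + (1-p) *\<^sub>R Y)) + (1-p) * cosh (l * norm (w + (-p) *\<^sub>R Y)))"
    unfolding n1 n0 T_def
    by (intro sums_add sums_mult) (use cosh_sqrt_series[OF s10] cosh_sqrt_series[OF s00] in auto)
  define f where "f k = T k * (2 * real k * a ^ (2*k-1) * L)" for k
  have fS: "f (Suc k) = (l * L) * ((l*a) ^ (2*k+1) / fact (2*k+1))" for k
    unfolding f_def T_def by (rule t1)
  have fsum: "f sums (l * L * sinh (l*a))"
  proof -
    have "(\<lambda>k. f (Suc k)) sums (l * L * sinh (l*a))"
      unfolding fS by (intro sums_mult sinh_series)
    then have "f sums (l * L * sinh (l*a) + f 0)" by (simp only: sums_Suc_iff)
    moreover have "f 0 = 0" by (simp add: f_def)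
    ultimately show ?thesis by simp
  qed
  have rhs: "(\<lambda>k. (1-p) * ((l*a) ^ (2*k) / fact (2*k)) + p * ((l*(a+L)) ^ (2*k) / fact (2*k) - f k))
      sums ((1-p) * cosh (l*a) + p * (cosh (l*(a+L)) - l * L * sinh (l*a)))"
    by (intro sums_add sums_mult sums_diff cosh_series fsum)
  have le: "p * (T k * s1 ^ k) + (1-p) * (T k * s0 ^ k)
      \<le> (1-p) * ((l*a) ^ (2*k) / fact (2*k)) + p * ((l*(a+L)) ^ (2*k) / fact (2*k) - f k)" for k
  proof -
    have "p * (T k * s1 ^ k) + (1-p) * (T k * s0 ^ k) = T k * (p * s1 ^ k + (1-p) * s0 ^ k)"
      by (simp add: algebra_simps)
    also have "\<dots> \<le> T k * ((1-p) * a ^ (2*k) + p * ((a+L) ^ (2*k) - 2 * real k * a ^ (2*k-1) * L))"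
      unfolding s1_def s0_def by (intro mult_left_mono pk a0 L0 cb p0 p1 T0)
    also have "\<dots> = (1-p) * ((l*a) ^ (2*k) / fact (2*k)) + p * ((l*(a+L)) ^ (2*k) / fact (2*k) - f k)"
      unfolding T_def f_def power_mult_distrib by (rule t2) simp
    finally show ?thesis .
  qed
  have main: "p * cosh (l * norm (w + (1-p) *\<^sub>R Y)) + (1-p) * cosh (l * norm (w + (-p) *\<^sub>R Y))
      \<le> (1-p) * cosh (l*a) + p * (cosh (l*(a+L)) - l * L * sinh (l*a))"
    by (rule sums_le[OF le lhs rhs])
  have h1: "sinh (l*a) \<le> cosh (l*a)" by (rule sinh_le_cosh_real)
  have h2: "l * L \<le> sinh (l*L)" using l0 L0 by (intro sinh_ge_self) simp
  have h3: "0 \<le> p * ((cosh (l*a) - sinh (l*a)) * (sinh (l*L) - l*L))"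
    using h1 h2 p0 by simp
  have eq: "cosh (l * a) * (1 + p * (exp (l * L) - 1 - l * L)) - ((1-p) * cosh (l*a) + p * (cosh (l*(a+L)) - l * L * sinh (l*a)))
     = p * ((cosh (l*a) - sinh (l*a)) * (sinh (l*L) - l*L))"
    by (rule t3)
  show ?thesis using main h3 eq unfolding a_def L_def by linarith
qed

lemma cosh_Pi_bound:
  fixes Y :: "'n::finite \<Rightarrow> 'v::real_inner" and p l :: real
  assumes A: "finite A" and p0: "0 \<le> p" and p1: "p \<le> 1" and l0: "0 \<le> l"
  shows "measure_pmf.expectation (Pi_pmf A False (\<lambda>_. bernoulli_pmf p))
           (\<lambda>b. cosh (l * norm (z + (\<Sum>i\<in>A. (of_bool (b i) - p) *\<^sub>R Y i))))
         \<le> cosh (l * norm z) * (\<Prod>i\<in>A. (1 + p * (exp (l * norm (Y i)) - 1 - l * norm (Y i))))"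
  using A
proof (induction A arbitrary: z rule: finite_induct)
  case empty
  then show ?case by simp
next
  case (insert x A)
  define K where "K = (\<Prod>i\<in>A. (1 + p * (exp (l * norm (Y i)) - 1 - l * norm (Y i))))"
  have K0: "0 \<le> K" unfolding K_def
  proof (intro prod_nonneg)
    fix i
    have "0 \<le> exp (l * norm (Y i)) - 1 - l * norm (Y i)" using exp_ge_add_one_self[of "l * norm (Y i)"] by linarith
    then show "0 \<le> 1 + p * (exp (l * norm (Y i)) - 1 - l * norm (Y i))" using p0 by simp
  qed
  let ?h = "\<lambda>b. cosh (l * norm (z + (\<Sum>i\<in>insert x A. (of_bool (b i) - p) *\<^sub>R Y i)))"
  let ?g = "\<lambda>y. cosh (l * norm (z + (of_bool y - p) *\<^sub>R Y x))"
  have inner: "measure_pmf.expectation (Pi_pmf A False (\<lambda>_. bernoulli_pmf p) \<bind> (\<lambda>f. return_pmf (f(x := y)))) ?h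
        \<le> ?g y * K" for y
  proof -
    have "measure_pmf.expectation (Pi_pmf A False (\<lambda>_. bernoulli_pmf p) \<bind> (\<lambda>f. return_pmf (f(x := y)))) ?h
        = measure_pmf.expectation (map_pmf (\<lambda>f. f(x := y)) (Pi_pmf A False (\<lambda>_. bernoulli_pmf p))) ?h"
      by (simp add: map_pmf_def)
    also have "\<dots> = measure_pmf.expectation (Pi_pmf A False (\<lambda>_. bernoulli_pmf p))
         (\<lambda>f. cosh (l * norm ((z + (of_bool y - p) *\<^sub>R Y x) + (\<Sum>i\<in>A. (of_bool (f i) - p) *\<^sub>R Y i))))"
    proof -
      have "(\<Sum>i\<in>insert x A. (of_bool ((f(x := y)) i) - p) *\<^sub>R Y i)
          = (of_bool y - p) *\<^sub>R Y x + (\<Sum>i\<in>A. (of_bool (f i) - p) *\<^sub>R Y i)" for f :: "'n \<Rightarrow> bool"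
      proof -
        have "(\<Sum>i\<in>A. (of_bool ((f(x := y)) i) - p) *\<^sub>R Y i) = (\<Sum>i\<in>A. (of_bool (f i) - p) *\<^sub>R Y i)"
          using insert.hyps(2) by (intro sum.cong) auto
        then show ?thesis using insert.hyps by simp
      qed
      then show ?thesis by (simp add: add.assoc)
    qed
    also have "\<dots> \<le> ?g y * K" unfolding K_def by (rule insert.IH)
    finally show ?thesis .
  qed
  have "measure_pmf.expectation (Pi_pmf (insert x A) False (\<lambda>_. bernoulli_pmf p)) ?h
      = (\<Sum>y\<in>UNIV. pmf (bernoulli_pmf p) y *\<^sub>R measure_pmf.expectation
            (Pi_pmf A False (\<lambda>_. bernoulli_pmf p) \<bind> (\<lambda>f. return_pmf (f(x := y)))) ?h)"
    unfolding Pi_pmf_insert'[OF insert.hyps]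
    by (rule pmf_expectation_bind) auto
  also have "\<dots> \<le> (\<Sum>y\<in>UNIV. pmf (bernoulli_pmf p) y *\<^sub>R (?g y * K))"
    by (intro sum_mono scaleR_left_mono inner) simp
  also have "\<dots> = (p * ?g True + (1-p) * ?g False) * K"
    using p0 p1 by (simp add: UNIV_bool algebra_simps)
  also have "p * ?g True + (1-p) * ?g False
      \<le> cosh (l * norm z) * (1 + p * (exp (l * norm (Y x)) - 1 - l * norm (Y x)))"
    using os[OF p0 p1 l0, of z "Y x"] by simp
  finally have "measure_pmf.expectation (Pi_pmf (insert x A) False (\<lambda>_. bernoulli_pmf p)) ?h
      \<le> cosh (l * norm z) * (1 + p * (exp (l * norm (Y x)) - 1 - l * norm (Y x))) * K"
    using K0 by (simp add: mult_right_mono)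
  then show ?case using insert.hyps by (simp add: K_def mult.assoc)
qed

lemma phi_mono:
  fixes u v :: real
  assumes "0 \<le> u" "u \<le> v"
  shows "exp u - 1 - u \<le> exp v - 1 - v"
proof -
  have "exp v = exp u * exp (v - u)" by (simp flip: exp_add)
  also have "\<dots> \<ge> exp u * (1 + (v - u))" by (intro mult_left_mono exp_ge_add_one_self) simp
  finally have "exp v \<ge> exp u + exp u * (v - u)" by (simp add: algebra_simps)
  moreover have "exp u * (v - u) \<ge> 1 * (v - u)"
    using assms by (intro mult_right_mono) auto
  then have "exp u * (v - u) \<ge> v - u" by simp
  ultimately show ?thesis by linarith
qed

lemma phi_quad:
  fixes g :: real
  assumes "0 \<le> g" "g \<le> 1/2"
  shows "exp g - 1 - g \<le> 57/64 * g\<^sup>2"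
proof -
  have "exp (g/2) \<le> 1 + g/2 + (g/2)\<^sup>2" using assms by (intro exp_bound) auto
  then have "exp (g/2) ^ 2 \<le> (1 + g/2 + (g/2)\<^sup>2) ^ 2"
    by (intro power_mono) auto
  moreover have "exp (g/2) ^ 2 = exp g" by (simp flip: exp_double)
  moreover have "(1 + g/2 + (g/2)\<^sup>2) ^ 2 = 1 + g + 3/4*g\<^sup>2 + g^3/4 + g^4/16"
    by (simp add: power2_eq_square power3_eq_cube power4_eq_xxxx algebra_simps)
  moreover have "g^3 \<le> g\<^sup>2 / 2"
  proof -
    have "g^3 = g * g\<^sup>2" by (simp add: power2_eq_square power3_eq_cube)
    also have "\<dots> \<le> 1/2 * g\<^sup>2" using assms by (intro mult_right_mono) auto
    finally show ?thesis by simp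
  qed
  moreover have "g^4 \<le> g\<^sup>2 / 4"
  proof -
    have "g^4 = g\<^sup>2 * g\<^sup>2" by (simp add: power2_eq_square power4_eq_xxxx)
    also have "\<dots> \<le> (1/4) * g\<^sup>2"
    proof (rule mult_right_mono)
      have "g\<^sup>2 \<le> (1/2)\<^sup>2" using assms by (intro power_mono) auto
      then show "g\<^sup>2 \<le> 1/4" by (simp add: power2_eq_square)
    qed simp
    finally show ?thesis by simp
  qed
  ultimately show ?thesis by linarith
qed

lemma tail_bound:
  fixes Y :: "'n::finite \<Rightarrow> 'v::real_inner" and p L s :: real and I :: "'n set"
  assumes p0: "0 < p" and p1: "p \<le> 1" and L0: "0 < L" and YL: "\<And>i. i \<in> I \<Longrightarrow> norm (Y i) \<le> L"
    and s0: "0 < s" and sM: "s \<le> p * real (card I) * L / 2"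
  shows "measure_pmf.prob (Pi_pmf UNIV False (\<lambda>_. bernoulli_pmf p))
           {b. s \<le> norm (\<Sum>i\<in>I. (of_bool (b i) - p) *\<^sub>R Y i)}
         \<le> 2 * exp (- (7 * s\<^sup>2 / (64 * (p * real (card I)) * L\<^sup>2)))"
proof -
  define M where "M = p * real (card I)"
  have ML0: "0 < M * L" using s0 sM unfolding M_def by linarith
  then have M0: "0 < M" using L0 by (simp add: zero_less_mult_iff)
  define l where "l = s / (M * L\<^sup>2)"
  define g where "g = l * L"
  have l0: "0 \<le> l" using s0 M0 L0 by (simp add: l_def)
  have g_eq: "g = s / (M * L)" using L0 by (simp add: g_def l_def power2_eq_square)
  have g0: "0 \<le> g" using s0 M0 L0 by (simp add: g_eq)
  have g1: "g \<le> 1/2" unfolding g_eq using ML0 sM by (simp add: M_def divide_le_eq)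
  define Y' where "Y' i = (if i \<in> I then Y i else 0)" for i
  define Z where "Z b = (\<Sum>i\<in>I. (of_bool (b i) - p) *\<^sub>R Y i)" for b :: "'n \<Rightarrow> bool"
  have Z_eq: "Z b = 0 + (\<Sum>i\<in>UNIV. (of_bool (b i) - p) *\<^sub>R Y' i)" for b
    unfolding Z_def Y'_def by (simp add: sum.If_cases if_distrib[of "\<lambda>v. _ *\<^sub>R v"] cong: if_cong)
  let ?P = "Pi_pmf UNIV False (\<lambda>_. bernoulli_pmf p)"
  define phi where "phi u = exp u - 1 - u" for u :: real
  have phi0: "0 \<le> phi u" for u using exp_ge_add_one_self[of u] unfolding phi_def by linarith
  have E: "measure_pmf.expectation ?P (\<lambda>b. cosh (l * norm (Z b)))
      \<le> cosh (l * norm (0::'v)) * (\<Prod>i\<in>UNIV. (1 + p * (exp (l * norm (Y' i)) - 1 - l * norm (Y' i))))"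
    unfolding Z_eq by (rule cosh_Pi_bound) (use p0 p1 l0 in auto)
  also have "(\<Prod>i\<in>UNIV. (1 + p * (exp (l * norm (Y' i)) - 1 - l * norm (Y' i))))
      = (\<Prod>i\<in>I. (1 + p * phi (l * norm (Y i))))"
    by (rule prod.mono_neutral_cong_right) (auto simp: Y'_def phi_def)
  also have "\<dots> \<le> (\<Prod>i\<in>I. (1 + p * phi g))"
  proof (intro prod_mono conjI)
    fix i assume i: "i \<in> I"
    show "0 \<le> 1 + p * phi (l * norm (Y i))" using p0 phi0 by (simp add: add_nonneg_nonneg)
    have "l * norm (Y i) \<le> l * L" using YL[OF i] l0 by (simp add: mult_left_mono)
    then have "phi (l * norm (Y i)) \<le> phi g" unfolding phi_def g_def using l0
      by (intro phi_mono) auto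
    then show "1 + p * phi (l * norm (Y i)) \<le> 1 + p * phi g" using p0 by simp
  qed
  also have "\<dots> = (1 + p * phi g) ^ card I" by simp
  also have "\<dots> \<le> exp (p * phi g) ^ card I"
    using p0 phi0 by (intro power_mono) (auto simp: add_nonneg_nonneg)
  also have "\<dots> = exp (M * phi g)" by (simp add: M_def exp_of_nat_mult[symmetric] mult.commute mult.left_commute)
  also have "\<dots> \<le> exp (M * (57/64 * g\<^sup>2))"
    using phi_quad[OF g0 g1] M0 by (simp add: phi_def)
  finally have E2: "measure_pmf.expectation ?P (\<lambda>b. cosh (l * norm (Z b))) \<le> exp (M * (57/64 * g\<^sup>2))"
    by simp
  have cpos: "0 < cosh (l * s)" by (simp add: cosh_real_pos)
  have "measure_pmf.prob ?P {b. s \<le> norm (Z b)} \<le> measure_pmf.prob ?P {b \<in> space (measure_pmf ?P). cosh (l * s) \<le> cosh (l * norm (Z b))}"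
  proof (rule measure_pmf.finite_measure_mono)
    show "{b. s \<le> norm (Z b)} \<subseteq> {b \<in> space (measure_pmf ?P). cosh (l * s) \<le> cosh (l * norm (Z b))}"
      using l0 s0 by (auto simp: cosh_real_nonneg_le_iff mult_left_mono)
  qed simp
  also have "\<dots> \<le> measure_pmf.expectation ?P (\<lambda>b. cosh (l * norm (Z b))) / cosh (l * s)"
    by (rule integral_Markov_inequality_measure[where A = UNIV])
       (auto simp: cpos integrable_measure_pmf_finite)
  also have "\<dots> \<le> exp (M * (57/64 * g\<^sup>2)) / (exp (l * s) / 2)"
  proof (rule frac_le)
    show "exp (l * s) / 2 \<le> cosh (l * s)" unfolding cosh_def by simp
  qed (use E2 in auto)
  also have "\<dots> = 2 * exp (M * (57/64 * g\<^sup>2) - l * s)"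
    by (simp add: exp_diff)
  also have "M * (57/64 * g\<^sup>2) - l * s = - (7 * s\<^sup>2 / (64 * M * L\<^sup>2))"
    using M0 L0 by (simp add: g_eq l_def power2_eq_square field_simps)
  finally show ?thesis by (simp add: Z_def M_def)
qed

lemma vm_Xmat: "(u v* Xmat x S) $ i = (if i \<in> S then u \<bullet> (x i - centroid x S) else 0)"
  by (simp add: vector_matrix_mult_def Xmat_def inner_vec_def mult.commute if_distrib cong: if_cong)

lemma q_eq:
  fixes x :: "'n::finite \<Rightarrow> real^'d"
  shows "(norm (u v* Xmat x S))\<^sup>2 = (\<Sum>i\<in>S. (u \<bullet> (x i - centroid x S))\<^sup>2)"
proof -
  have "(norm (u v* Xmat x S))\<^sup>2 = (\<Sum>i\<in>UNIV. ((u v* Xmat x S) $ i)\<^sup>2)"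
    unfolding power2_norm_eq_inner inner_vec_def by (simp add: power2_eq_square)
  also have "\<dots> = (\<Sum>i\<in>UNIV. if i \<in> S then (u \<bullet> (x i - centroid x S))\<^sup>2 else 0)"
    by (simp add: vm_Xmat if_distrib[of "\<lambda>v. v\<^sup>2"] cong: if_cong)
  also have "\<dots> = (\<Sum>i\<in>S. (u \<bullet> (x i - centroid x S))\<^sup>2)"
    by (simp add: sum.If_cases)
  finally show ?thesis .
qed

lemma vm_le_opnorm:
  fixes A :: "real^'n^'d"
  shows "norm (u v* A) \<le> opnorm2 A * norm u"
proof (cases "u v* A = 0")
  case True then show ?thesis
    by (simp add: opnorm2_def onorm_pos_le)
next
  case False
  let ?w = "u v* A"
  have "(norm ?w)\<^sup>2 = ?w \<bullet> ?w" by (simp add: power2_norm_eq_inner)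
  also have "\<dots> = u \<bullet> (A *v ?w)" by (rule dot_lmul_matrix)
  also have "\<dots> \<le> norm u * norm (A *v ?w)" by (rule Cauchy_Schwarz_ineq2[THEN order_trans[OF abs_ge_self]])
  also have "\<dots> \<le> norm u * (opnorm2 A * norm ?w)"
    unfolding opnorm2_def by (intro mult_left_mono onorm) auto
  finally have "norm ?w * norm ?w \<le> (norm u * opnorm2 A) * norm ?w" by (simp add: power2_eq_square algebra_simps)
  then show ?thesis using False by (simp add: mult.commute)
qed

lemma opnorm_le_vm:
  fixes A :: "real^'n^'d"
  assumes c0: "0 \<le> c" and H: "\<And>u. norm (u v* A) \<le> c * norm u"
  shows "opnorm2 A \<le> c"
  unfolding opnorm2_def
proof (rule onorm_le)
  fix v
  show "norm (A *v v) \<le> c * norm v"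
  proof (cases "A *v v = 0")
    case True then show ?thesis using c0 by simp
  next
    case False
    let ?w = "A *v v"
    have "(norm ?w)\<^sup>2 = ?w \<bullet> ?w" by (simp add: power2_norm_eq_inner)
    also have "\<dots> = (?w v* A) \<bullet> v" by (rule dot_lmul_matrix[symmetric])
    also have "\<dots> \<le> norm (?w v* A) * norm v" by (rule Cauchy_Schwarz_ineq2[THEN order_trans[OF abs_ge_self]])
    also have "\<dots> \<le> (c * norm ?w) * norm v" by (intro mult_right_mono H) auto
    finally have "norm ?w * norm ?w \<le> (c * norm v) * norm ?w" by (simp add: power2_eq_square algebra_simps)
    then show ?thesis using False by simp
  qed
qed

lemma q_le_opnorm:
  fixes x :: "'n::finite \<Rightarrow> real^'d"
  shows "(\<Sum>i\<in>S. (u \<bullet> (x i - centroid x S))\<^sup>2) \<le> (opnorm2 (Xmat x S))\<^sup>2 * (norm u)\<^sup>2"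
proof -
  have "norm (u v* Xmat x S) \<le> opnorm2 (Xmat x S) * norm u" by (rule vm_le_opnorm)
  then have "(norm (u v* Xmat x S))\<^sup>2 \<le> (opnorm2 (Xmat x S) * norm u)\<^sup>2"
    by (intro power_mono) auto
  then show ?thesis by (simp add: q_eq power_mult_distrib)
qed

lemma opnorm_le_q:
  fixes x :: "'n::finite \<Rightarrow> real^'d"
  assumes K0: "0 \<le> K" and H: "\<And>u. (\<Sum>i\<in>S. (u \<bullet> (x i - centroid x S))\<^sup>2) \<le> K * (norm u)\<^sup>2"
  shows "(opnorm2 (Xmat x S))\<^sup>2 \<le> K"
proof -
  have "opnorm2 (Xmat x S) \<le> sqrt K"
  proof (rule opnorm_le_vm)
    fix u :: "real^'d"
    have "(norm (u v* Xmat x S))\<^sup>2 \<le> K * (norm u)\<^sup>2" using H[of u] by (simp add: q_eq)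
    then have "sqrt ((norm (u v* Xmat x S))\<^sup>2) \<le> sqrt (K * (norm u)\<^sup>2)" by (rule real_sqrt_le_mono)
    then show "norm (u v* Xmat x S) \<le> sqrt K * norm u" by (simp add: real_sqrt_mult)
  qed (simp add: K0)
  moreover have "0 \<le> opnorm2 (Xmat x S)" unfolding opnorm2_def by (intro onorm_pos_le) auto
  ultimately have "(opnorm2 (Xmat x S))\<^sup>2 \<le> (sqrt K)\<^sup>2" by (intro power_mono) auto
  then show ?thesis using K0 by simp
qed

definition outer :: "real^'d \<Rightarrow> real^'d^'d" where
  "outer y = (\<chi> a b. y $ a * y $ b)"

lemma outer_inner: "outer y \<bullet> outer u = (y \<bullet> u)\<^sup>2"
proof -
  have "outer y \<bullet> outer u = (\<Sum>a\<in>UNIV. \<Sum>c\<in>UNIV. (y $ a * u $ a) * (y $ c * u $ c))"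
    by (simp add: outer_def inner_vec_def algebra_simps)
  also have "\<dots> = (\<Sum>a\<in>UNIV. y $ a * u $ a) * (\<Sum>c\<in>UNIV. y $ c * u $ c)"
    by (simp add: sum_product)
  also have "\<dots> = (y \<bullet> u)\<^sup>2" by (simp add: inner_vec_def power2_eq_square)
  finally show ?thesis .
qed

lemma norm_outer: "norm (outer y) = (norm y)\<^sup>2"
proof -
  have "(norm (outer y))\<^sup>2 = ((norm y)\<^sup>2)\<^sup>2"
    by (simp add: power2_norm_eq_inner outer_inner)
  then show ?thesis by (rule power2_eq_imp_eq) simp_all
qed

lemma sum_centered:
  fixes x :: "'n::finite \<Rightarrow> real^'d"
  shows "(\<Sum>i\<in>R. x i - centroid x R) = 0"
proof (cases "R = {}")
  case True then show ?thesis by simp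
next
  case False
  then have "card R > 0" by (simp add: card_gt_0_iff)
  have "(\<Sum>i\<in>R. centroid x R) = real (card R) *\<^sub>R centroid x R" by (rule sum_constant_scaleR)
  also have "\<dots> = sum x R" using \<open>card R > 0\<close> by (simp add: centroid_def)
  finally show ?thesis by (simp add: sum_subtractf)
qed

lemma dev_bound:
  fixes x :: "'n::finite \<Rightarrow> real^'d" and R :: "'n set" and b :: "'n \<Rightarrow> bool" and p :: real
  assumes p0: "0 < p"
  shows "\<bar>(opnorm2 (Xmat x (R \<inter> {i. b i})))\<^sup>2 - p * (opnorm2 (Xmat x R))\<^sup>2\<bar>
     \<le> norm (\<Sum>i\<in>R. (of_bool (b i) - p) *\<^sub>R outer (x i - centroid x R))
       + (norm (\<Sum>i\<in>R. (of_bool (b i) - p) *\<^sub>R (x i - centroid x R)))\<^sup>2 / real (card (R \<inter> {i. b i}))"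
proof -
  define y where "y i = x i - centroid x R" for i
  define R' where "R' = R \<inter> {i. b i}"
  define N where "N = real (card R')"
  define v where "v = (\<Sum>i\<in>R. (of_bool (b i) - p) *\<^sub>R y i)"
  define F where "F = (\<Sum>i\<in>R. (of_bool (b i) - p) *\<^sub>R outer (y i))"
  define D where "D = norm F + (norm v)\<^sup>2 / N"
  have N0: "0 \<le> N" by (simp add: N_def)
  have D0: "0 \<le> D" using N0 by (simp add: D_def)
  have sy: "(\<Sum>i\<in>R. y i) = 0" unfolding y_def by (rule sum_centered)
  have v_eq: "v = (\<Sum>i\<in>R'. y i)"
  proof -
    have "v = (\<Sum>i\<in>R. of_bool (b i) *\<^sub>R y i) - p *\<^sub>R (\<Sum>i\<in>R. y i)"
      by (simp add: v_def scaleR_diff_left sum_subtractf scaleR_sum_right)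
    also have "(\<Sum>i\<in>R. of_bool (b i) *\<^sub>R y i) = (\<Sum>i\<in>R. if b i then y i else 0)"
      by (intro sum.cong) auto
    also have "\<dots> = (\<Sum>i\<in>R'. y i)"
      unfolding R'_def by (simp add: sum.inter_filter Int_def)
    finally show ?thesis using sy by simp
  qed
  have qR': "(\<Sum>i\<in>R'. (u \<bullet> (x i - centroid x R'))\<^sup>2)
      = (\<Sum>i\<in>R'. (u \<bullet> y i)\<^sup>2) - (u \<bullet> v)\<^sup>2 / N" for u
  proof (cases "R' = {}")
    case True
    then show ?thesis by (simp add: N_def)
  next
    case False
    then have Npos: "0 < N" by (simp add: N_def card_gt_0_iff)
    have "centroid x R' = (1 / N) *\<^sub>R (\<Sum>i\<in>R'. x i)" by (simp add: centroid_def N_def)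
    also have "(\<Sum>i\<in>R'. x i) = (\<Sum>i\<in>R'. y i + centroid x R)" by (simp add: y_def)
    also have "\<dots> = v + N *\<^sub>R centroid x R" by (simp only: sum.distrib v_eq N_def sum_constant_scaleR)
    finally have cR': "centroid x R' = centroid x R + (1/N) *\<^sub>R v"
      using Npos by (simp add: scaleR_add_right)
    have a: "u \<bullet> (x i - centroid x R') = u \<bullet> y i - (u \<bullet> v) / N" for i
      by (simp add: cR' y_def inner_diff_right inner_add_right algebra_simps)
    have "(\<Sum>i\<in>R'. (u \<bullet> (x i - centroid x R'))\<^sup>2)
        = (\<Sum>i\<in>R'. (u \<bullet> y i)\<^sup>2 - 2 * ((u \<bullet> v) / N) * (u \<bullet> y i) + ((u \<bullet> v) / N)\<^sup>2)"
      unfolding a by (intro sum.cong refl) (simp add: power2_eq_square algebra_simps)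
    also have "\<dots> = (\<Sum>i\<in>R'. (u \<bullet> y i)\<^sup>2) - 2 * ((u \<bullet> v) / N) * (\<Sum>i\<in>R'. u \<bullet> y i) + N * ((u \<bullet> v) / N)\<^sup>2"
      by (simp add: sum.distrib sum_subtractf sum_distrib_left N_def)
    also have "(\<Sum>i\<in>R'. u \<bullet> y i) = u \<bullet> v" by (simp add: v_eq inner_sum_right)
    finally show ?thesis using Npos by (simp add: power2_eq_square field_simps)
  qed
  have qR: "(\<Sum>i\<in>R. (u \<bullet> (x i - centroid x R))\<^sup>2) = (\<Sum>i\<in>R. (u \<bullet> y i)\<^sup>2)" for u
    by (simp add: y_def)
  have Fq: "F \<bullet> outer u = (\<Sum>i\<in>R. (of_bool (b i) - p) * (u \<bullet> y i)\<^sup>2)" for u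
  proof -
    have "F \<bullet> outer u = (\<Sum>i\<in>R. (of_bool (b i) - p) * (y i \<bullet> u)\<^sup>2)"
      unfolding F_def inner_sum_left inner_scaleR_left outer_inner ..
    then show ?thesis by (simp add: inner_commute)
  qed
  have R'sum: "(\<Sum>i\<in>R'. (u \<bullet> y i)\<^sup>2) = (\<Sum>i\<in>R. of_bool (b i) * (u \<bullet> y i)\<^sup>2)" for u
  proof -
    have "(\<Sum>i\<in>R. of_bool (b i) * (u \<bullet> y i)\<^sup>2) = (\<Sum>i\<in>R. if b i then (u \<bullet> y i)\<^sup>2 else 0)"
      by (intro sum.cong) auto
    also have "\<dots> = (\<Sum>i\<in>R'. (u \<bullet> y i)\<^sup>2)"
      unfolding R'_def by (simp add: sum.inter_filter Int_def)
    finally show ?thesis by simp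
  qed
  have diff: "\<bar>(\<Sum>i\<in>R'. (u \<bullet> (x i - centroid x R'))\<^sup>2) - p * (\<Sum>i\<in>R. (u \<bullet> (x i - centroid x R))\<^sup>2)\<bar>
      \<le> D * (norm u)\<^sup>2" for u
  proof -
    have e: "(\<Sum>i\<in>R'. (u \<bullet> (x i - centroid x R'))\<^sup>2) - p * (\<Sum>i\<in>R. (u \<bullet> (x i - centroid x R))\<^sup>2)
        = F \<bullet> outer u - (u \<bullet> v)\<^sup>2 / N"
      unfolding qR' qR Fq R'sum by (simp add: sum_distrib_left sum_subtractf algebra_simps)
    have "\<bar>F \<bullet> outer u\<bar> \<le> norm F * norm (outer u)" by (rule Cauchy_Schwarz_ineq2)
    also have "\<dots> = norm F * (norm u)\<^sup>2" by (simp add: norm_outer)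
    finally have 1: "\<bar>F \<bullet> outer u\<bar> \<le> norm F * (norm u)\<^sup>2" .
    have "\<bar>u \<bullet> v\<bar>\<^sup>2 \<le> (norm u * norm v)\<^sup>2"
      by (rule power_mono[OF Cauchy_Schwarz_ineq2]) simp
    then have "(u \<bullet> v)\<^sup>2 \<le> (norm u * norm v)\<^sup>2" by simp
    then have 2: "(u \<bullet> v)\<^sup>2 / N \<le> (norm v)\<^sup>2 / N * (norm u)\<^sup>2"
      using N0 by (simp add: divide_right_mono power_mult_distrib algebra_simps)
    have 3: "0 \<le> (u \<bullet> v)\<^sup>2 / N" using N0 by simp
    show ?thesis unfolding e D_def using 1 2 3 by (simp add: algebra_simps abs_le_iff)
  qed
  define \<alpha> where "\<alpha> = (opnorm2 (Xmat x R'))\<^sup>2"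
  define \<beta> where "\<beta> = (opnorm2 (Xmat x R))\<^sup>2"
  have \<alpha>0: "0 \<le> \<alpha>" and \<beta>0: "0 \<le> \<beta>" by (simp_all add: \<alpha>_def \<beta>_def)
  have "\<alpha> \<le> p * \<beta> + D"
    unfolding \<alpha>_def
  proof (rule opnorm_le_q)
    show "0 \<le> p * \<beta> + D" using p0 \<beta>0 D0 by simp
    fix u :: "real^'d"
    have "(\<Sum>i\<in>R'. (u \<bullet> (x i - centroid x R'))\<^sup>2) \<le> p * (\<Sum>i\<in>R. (u \<bullet> (x i - centroid x R))\<^sup>2) + D * (norm u)\<^sup>2"
      using diff[of u] by (simp add: abs_le_iff)
    also have "\<dots> \<le> p * (\<beta> * (norm u)\<^sup>2) + D * (norm u)\<^sup>2"
      unfolding \<beta>_def using p0 by (intro add_right_mono mult_left_mono q_le_opnorm) auto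
    finally show "(\<Sum>i\<in>R'. (u \<bullet> (x i - centroid x R'))\<^sup>2) \<le> (p * \<beta> + D) * (norm u)\<^sup>2"
      by (simp add: algebra_simps)
  qed
  moreover have "\<beta> \<le> (\<alpha> + D) / p"
    unfolding \<beta>_def
  proof (rule opnorm_le_q)
    show "0 \<le> (\<alpha> + D) / p" using p0 \<alpha>0 D0 by simp
    fix u :: "real^'d"
    have "p * (\<Sum>i\<in>R. (u \<bullet> (x i - centroid x R))\<^sup>2) \<le> (\<Sum>i\<in>R'. (u \<bullet> (x i - centroid x R'))\<^sup>2) + D * (norm u)\<^sup>2"
      using diff[of u] by (simp add: abs_le_iff)
    also have "\<dots> \<le> \<alpha> * (norm u)\<^sup>2 + D * (norm u)\<^sup>2"
      unfolding \<alpha>_def by (intro add_right_mono q_le_opnorm)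
    finally show "(\<Sum>i\<in>R. (u \<bullet> (x i - centroid x R))\<^sup>2) \<le> (\<alpha> + D) / p * (norm u)\<^sup>2"
      using p0 by (simp add: field_simps)
  qed
  then have "p * \<beta> \<le> \<alpha> + D" using p0 by (simp add: field_simps)
  ultimately have "\<bar>\<alpha> - p * \<beta>\<bar> \<le> D" by (simp add: abs_le_iff)
  then show ?thesis by (simp add: \<alpha>_def \<beta>_def D_def F_def v_def N_def y_def R'_def)
qed

lemma radius_ge:
  fixes x :: "'n::finite \<Rightarrow> real^'d"
  assumes "S \<in> \<Gamma>" "i \<in> S"
  shows "norm (x i - centroid x S) \<le> radius x \<Gamma>"
  unfolding radius_def
proof (rule Max_ge)
  have "{norm (x i - centroid x S) |S i. S \<in> \<Gamma> \<and> i \<in> S} \<subseteq> (\<lambda>(S, i). norm (x i - centroid x S)) ` UNIV"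
    by auto
  then show "finite {norm (x i - centroid x S) |S i. S \<in> \<Gamma> \<and> i \<in> S}"
    by (rule finite_subset) simp
  show "norm (x i - centroid x S) \<in> {norm (x i - centroid x S) |S i. S \<in> \<Gamma> \<and> i \<in> S}"
    using assms by auto
qed

theorem lemma13:
  fixes x :: "'n::finite \<Rightarrow> real^'d" and \<Gamma> :: "'n set set" and R :: "'n set"
    and p t :: real
  assumes "partition_on UNIV \<Gamma>" and "R \<in> \<Gamma>"
    and "0 < p" and "p \<le> 1"
    and "0 \<le> t" and "t \<le> p * real (card R) * (radius x \<Gamma>)\<^sup>2"
  shows "measure_pmf.prob (Pi_pmf UNIV False (\<lambda>_. bernoulli_pmf p))
           {b. \<bar>(opnorm2 (Xmat x (R \<inter> {i. b i})))\<^sup>2 - p * (opnorm2 (Xmat x R))\<^sup>2\<bar> \<ge> t}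
         \<le> (3 * real CARD('d) + 3) * exp (- (t\<^sup>2 / (48 * p * real (card R) * (radius x \<Gamma>) ^ 4)))"
proof -
  note RG = assms(2) and p0 = assms(3) and p1 = assms(4) and t0 = assms(5) and tM = assms(6)
  let ?P = "Pi_pmf UNIV False (\<lambda>_. bernoulli_pmf p)"
  let ?ev = "{b. \<bar>(opnorm2 (Xmat x (R \<inter> {i. b i})))\<^sup>2 - p * (opnorm2 (Xmat x R))\<^sup>2\<bar> \<ge> t}"
  define r where "r = radius x \<Gamma>"
  define m where "m = real (card R)"
  define M where "M = p * m"
  define \<tau> where "\<tau> = t\<^sup>2 / (48 * p * real (card R) * r ^ 4)"
  have d1: "1 \<le> real CARD('d)" by simp
  have exp0: "0 \<le> exp (- \<tau>)" by simp
  show ?thesis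
  proof (cases "t = 0")
    case True
    have "measure_pmf.prob ?P ?ev \<le> 1" by simp
    also have "\<dots> \<le> (3 * real CARD('d) + 3) * exp (- \<tau>)" using True d1 by (simp add: \<tau>_def)
    finally show ?thesis by (simp add: \<tau>_def r_def)
  next
    case False
    then have tpos: "0 < t" using t0 by simp
    define y where "y i = x i - centroid x R" for i
    have yr: "norm (y i) \<le> r" if "i \<in> R" for i
      unfolding y_def r_def using RG that by (rule radius_ge)
    have Mr: "t \<le> M * r\<^sup>2" using tM by (simp add: M_def m_def r_def)
    have Mr2pos: "0 < M * r\<^sup>2" using tpos Mr by linarith
    have r0: "r \<noteq> 0" using Mr2pos by auto
    have m0: "m \<noteq> 0" using Mr2pos by (auto simp: M_def)
    then have "R \<noteq> {}" by (auto simp: m_def)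
    then obtain i0 where "i0 \<in> R" by auto
    then have "0 \<le> r" using yr[of i0] by (meson norm_ge_zero order_trans)
    with r0 have rpos: "0 < r" by simp
    have Mpos: "0 < M" using Mr2pos rpos by (simp add: zero_less_mult_iff)
    have mpos: "0 < m" using m0 by (simp add: m_def card_gt_0_iff)
    define E1 where "E1 = {b. t/2 \<le> norm (\<Sum>i\<in>R. (of_bool (b i) - p) *\<^sub>R outer (y i))}"
    define E2 where "E2 = {b. M/2 \<le> norm (\<Sum>i\<in>R. (of_bool (b i) - p) *\<^sub>R (1::real))}"
    define E3 where "E3 = {b. sqrt (t * M) / 2 \<le> norm (\<Sum>i\<in>R. (of_bool (b i) - p) *\<^sub>R y i)}"
    have sub: "?ev \<subseteq> E1 \<union> E2 \<union> E3"
    proof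
      fix b assume bev: "b \<in> ?ev"
      show "b \<in> E1 \<union> E2 \<union> E3"
      proof (rule ccontr)
        assume "b \<notin> E1 \<union> E2 \<union> E3"
        then have n1: "norm (\<Sum>i\<in>R. (of_bool (b i) - p) *\<^sub>R outer (y i)) < t/2"
          and n2: "norm (\<Sum>i\<in>R. (of_bool (b i) - p) *\<^sub>R (1::real)) < M/2"
          and n3: "norm (\<Sum>i\<in>R. (of_bool (b i) - p) *\<^sub>R y i) < sqrt (t * M) / 2"
          by (auto simp: E1_def E2_def E3_def not_le)
        define N where "N = real (card (R \<inter> {i. b i}))"
        define v where "v = (\<Sum>i\<in>R. (of_bool (b i) - p) *\<^sub>R y i)"
        have "(\<Sum>i\<in>R. (of_bool (b i) - p) *\<^sub>R (1::real)) = (\<Sum>i\<in>R. of_bool (b i)) - M"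
          by (simp add: sum_subtractf M_def m_def)
        also have "(\<Sum>i\<in>R. of_bool (b i) :: real) = N"
        proof -
          have "(\<Sum>i\<in>R. of_bool (b i) :: real) = (\<Sum>i\<in>R. if b i then 1 else 0)" by (intro sum.cong) auto
          also have "\<dots> = N" by (simp add: sum.inter_filter[symmetric] N_def Int_def)
          finally show ?thesis .
        qed
        finally have "\<bar>N - M\<bar> < M/2" using n2 by simp
        then have NM: "M/2 < N" by linarith
        have v0: "0 \<le> norm v" by simp
        have "(norm v)\<^sup>2 < (sqrt (t * M) / 2)\<^sup>2"
          using n3 v0 unfolding v_def by (intro power_strict_mono) auto
        also have "\<dots> = t * M / 4" using tpos Mpos by (simp add: power_divide)
        finally have vb: "(norm v)\<^sup>2 < t * M / 4" .
        have "(norm v)\<^sup>2 / N \<le> (norm v)\<^sup>2 / (M/2)"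
          using NM Mpos by (intro divide_left_mono) auto
        also have "\<dots> < (t * M / 4) / (M/2)"
          using vb Mpos by (intro divide_strict_right_mono) auto
        also have "\<dots> = t/2" using Mpos by simp
        finally have vN: "(norm v)\<^sup>2 / N < t/2" .
        have "\<bar>(opnorm2 (Xmat x (R \<inter> {i. b i})))\<^sup>2 - p * (opnorm2 (Xmat x R))\<^sup>2\<bar>
            \<le> norm (\<Sum>i\<in>R. (of_bool (b i) - p) *\<^sub>R outer (y i)) + (norm v)\<^sup>2 / N"
          using dev_bound[OF p0, of x R b] by (simp add: y_def v_def N_def)
        also have "\<dots> < t" using n1 vN by linarith
        finally show False using bev by simp
      qed
    qed
    have P1: "measure_pmf.prob ?P E1 \<le> 2 * exp (- \<tau>)"
    proof -
      have "measure_pmf.prob ?P E1 \<le> 2 * exp (- (7 * (t/2)\<^sup>2 / (64 * (p * real (card R)) * (r\<^sup>2)\<^sup>2)))"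
        unfolding E1_def
      proof (rule tail_bound)
        show "0 < r\<^sup>2" using rpos by simp
        show "norm (outer (y i)) \<le> r\<^sup>2" if "i \<in> R" for i
          using yr[OF that] by (simp add: norm_outer power_mono)
        show "t / 2 \<le> p * real (card R) * r\<^sup>2 / 2" using Mr by (simp add: M_def m_def)
      qed (use p0 p1 tpos in auto)
      also have "\<dots> \<le> 2 * exp (- \<tau>)"
      proof -
        have "\<tau> = t\<^sup>2 / (48 * (M * r ^ 4))" by (simp add: \<tau>_def M_def m_def mult.assoc)
        also have "\<dots> \<le> 7 * t\<^sup>2 / (256 * (M * r ^ 4))"
          using Mpos rpos by (simp add: field_simps)
        also have "\<dots> = 7 * (t/2)\<^sup>2 / (64 * (p * real (card R)) * (r\<^sup>2)\<^sup>2)"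
          by (simp add: M_def m_def power2_eq_square power4_eq_xxxx field_simps)
        finally show ?thesis by simp
      qed
      finally show ?thesis .
    qed
    have P2: "measure_pmf.prob ?P E2 \<le> 2 * exp (- \<tau>)"
    proof -
      have "measure_pmf.prob ?P E2 \<le> 2 * exp (- (7 * (M/2)\<^sup>2 / (64 * (p * real (card R)) * 1\<^sup>2)))"
        unfolding E2_def
        by (rule tail_bound) (use p0 p1 Mpos in \<open>auto simp: M_def m_def\<close>)
      also have "\<dots> \<le> 2 * exp (- \<tau>)"
      proof -
        have t2: "t\<^sup>2 \<le> (M * r\<^sup>2)\<^sup>2" using Mr t0 by (intro power_mono) auto
        have "\<tau> = t\<^sup>2 / (48 * (M * r ^ 4))" by (simp add: \<tau>_def M_def m_def mult.assoc)
        also have "\<dots> \<le> (M * r\<^sup>2)\<^sup>2 / (48 * (M * r ^ 4))"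
          using t2 Mpos rpos by (intro divide_right_mono) auto
        also have "\<dots> = M / 48" using Mpos rpos by (simp add: power2_eq_square power4_eq_xxxx field_simps)
        also have "\<dots> \<le> 7 * (M/2)\<^sup>2 / (64 * (p * real (card R)) * 1\<^sup>2)"
        proof -
          have pm: "p * real (card R) = M" by (simp add: M_def m_def)
          show ?thesis unfolding pm using Mpos by (simp add: power2_eq_square field_simps)
        qed
        finally show ?thesis by simp
      qed
      finally show ?thesis .
    qed
    have P3: "measure_pmf.prob ?P E3 \<le> 2 * exp (- \<tau>)"
    proof -
      have tMpos: "0 \<le> t * M" using tpos Mpos by simp
      have "measure_pmf.prob ?P E3 \<le> 2 * exp (- (7 * (sqrt (t * M) / 2)\<^sup>2 / (64 * (p * real (card R)) * r\<^sup>2)))"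
        unfolding E3_def
      proof (rule tail_bound)
        show "norm (y i) \<le> r" if "i \<in> R" for i using yr[OF that] .
        have "t * M \<le> (M * r) ^ 2" using Mr Mpos by (simp add: power2_eq_square mult_left_mono mult.commute mult.left_commute)
        then have "sqrt (t * M) \<le> M * r" using Mpos rpos by (simp add: real_sqrt_le_iff real_le_lsqrt)
        then show "sqrt (t * M) / 2 \<le> p * real (card R) * r / 2" by (simp add: M_def m_def)
      qed (use p0 p1 tpos Mpos rpos in auto)
      also have "\<dots> \<le> 2 * exp (- \<tau>)"
      proof -
        have "\<tau> = t\<^sup>2 / (48 * (M * r ^ 4))" by (simp add: \<tau>_def M_def m_def mult.assoc)
        also have "\<dots> = t * (t / (M * r\<^sup>2)) / (48 * r\<^sup>2)"
          using Mpos rpos by (simp add: power2_eq_square power4_eq_xxxx field_simps)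
        also have "\<dots> \<le> t * 1 / (48 * r\<^sup>2)"
          using Mpos rpos tpos Mr by (intro divide_right_mono mult_left_mono) (auto simp: divide_le_eq)
        also have "\<dots> \<le> 7 * (t * M / 4) / (64 * M * r\<^sup>2)"
          using Mpos rpos tpos by (simp add: field_simps)
        also have "\<dots> = 7 * (sqrt (t * M) / 2)\<^sup>2 / (64 * (p * real (card R)) * r\<^sup>2)"
          using tMpos by (simp add: power_divide M_def m_def)
        finally show ?thesis by simp
      qed
      finally show ?thesis .
    qed
    have "measure_pmf.prob ?P ?ev \<le> measure_pmf.prob ?P (E1 \<union> E2 \<union> E3)"
      using sub by (intro measure_pmf.finite_measure_mono) auto
    also have "\<dots> \<le> measure_pmf.prob ?P (E1 \<union> E2) + measure_pmf.prob ?P E3"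
      by (rule measure_Un_le) auto
    also have "\<dots> \<le> measure_pmf.prob ?P E1 + measure_pmf.prob ?P E2 + measure_pmf.prob ?P E3"
      using measure_Un_le[where M = "measure_pmf ?P" and A = E1 and B = E2] by simp
    also have "\<dots> \<le> 6 * exp (- \<tau>)" using P1 P2 P3 by simp
    also have "\<dots> \<le> (3 * real CARD('d) + 3) * exp (- \<tau>)"
      using d1 exp0 by (intro mult_right_mono) auto
    finally show ?thesis by (simp add: \<tau>_def r_def)
  qed
qed

end
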